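(* Let $(X_n)_{n\in\mathbb{N}}$ be i.i.d. real random variables with distribution function $F$ and survival function $\bar F(x)=\mathbb{P}(X_1>x)$, with $\bar F(x)=x^{-\alpha}L(x)$ for all $x>x_0$, where $x_0>0$, $\alpha>0$ and $L$ is slowly varying, and assume $X_1$ has a density $f$ that is non-increasing on $[x_1,\infty)$ for some $x_1$. Let $a_n=F^{\leftarrow}(1-1/n)$ and, for $n\ge2$ and $x>0$, $t_n(x)=a_n x^{\log n/\alpha}$ and \[ g_n(x)=n\,a_n\,\frac{\alpha}{\log n}\,x^{\frac{\log n}{\alpha}-1}\,F^{n-1}(t_n(x))\,f(t_n(x)), \] which is the density on $(0,\infty)$ of $Z_n=(X_{(n)}/a_n)^{\alpha/\log n}$, $X_{(n)}=\max_{1\le i\le n}X_i$. Then for every fixed $M>1$, \[ \lim_{n\to\infty}\frac{1}{\log n}\log g_n(x)=-\log x \] uniformly in $x\in[1,M]$.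
   Context: A function $L:(0,\infty)\to(0,\infty)$ is slowly varying if $\lim_{x\to\infty}L(tx)/L(x)=1$ for all $t>0$. $F^{\leftarrow}(u)=\inf\{x\in\mathbb{R}: F(x)\ge u\}$ denotes the left-inverse of $F$. *)

theory Defs
  imports "HOL-Probability.Probability"
begin

definition slowly_varying :: "(real \<Rightarrow> real) \<Rightarrow> bool" where
  "slowly_varying L \<longleftrightarrow> (\<forall>x>0. L x > 0) \<and>
     (\<forall>t>0. ((\<lambda>x. L (t * x) / L x) \<longlongrightarrow> 1) at_top)"

definition left_inv :: "(real \<Rightarrow> real) \<Rightarrow> real \<Rightarrow> real" where
  "left_inv F u = Inf {x. F x \<ge> u}"

definition a_seq :: "(real \<Rightarrow> real) \<Rightarrow> nat \<Rightarrow> real" where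
  "a_seq F n = left_inv F (1 - 1 / real n)"

definition t_seq :: "(real \<Rightarrow> real) \<Rightarrow> real \<Rightarrow> nat \<Rightarrow> real \<Rightarrow> real" where
  "t_seq F \<alpha> n x = a_seq F n * x powr (ln (real n) / \<alpha>)"

definition g_seq :: "(real \<Rightarrow> real) \<Rightarrow> (real \<Rightarrow> real) \<Rightarrow> real \<Rightarrow> nat \<Rightarrow> real \<Rightarrow> real" where
  "g_seq F f \<alpha> n x = real n * a_seq F n * (\<alpha> / ln (real n)) * x powr (ln (real n) / \<alpha> - 1)
      * (F (t_seq F \<alpha> n x)) ^ (n - 1) * f (t_seq F \<alpha> n x)"

end

theory Submission
  imports Defs "HOL-Real_Asymp.Real_Asymp"
begin

lemma logreg:
  fixes S :: "real \<Rightarrow> real" and \<alpha> z :: real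
  assumes mono: "\<And>s t. s \<le> t \<Longrightarrow> S t \<le> S s"
    and pos: "\<And>t. t > z \<Longrightarrow> S t > 0"
    and lim: "((\<lambda>t. ln (S (2*t)) - ln (S t)) \<longlongrightarrow> - \<alpha> * ln 2) at_top"
    and \<alpha>: "\<alpha> > 0" and e: "\<epsilon> > 0"
  shows "eventually (\<lambda>t. \<bar>ln (S t) + \<alpha> * ln t\<bar> \<le> \<epsilon> * ln t) at_top"
proof -
  define \<phi> where "\<phi> t = ln (S t) + \<alpha> * ln t" for t
  define \<delta> where "\<delta> = \<epsilon> * ln 2 / 2"
  have \<delta>: "\<delta> > 0" using e by (simp add: \<delta>_def)
  have "((\<lambda>t. (ln (S (2*t)) - ln (S t)) + \<alpha> * ln 2) \<longlongrightarrow> - \<alpha> * ln 2 + \<alpha> * ln 2) at_top"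
    by (intro tendsto_intros lim)
  hence "((\<lambda>t. (ln (S (2*t)) - ln (S t)) + \<alpha> * ln 2) \<longlongrightarrow> 0) at_top" by simp
  hence "eventually (\<lambda>t. dist ((ln (S (2*t)) - ln (S t)) + \<alpha> * ln 2) 0 < \<delta>) at_top"
    using \<delta> tendstoD by blast
  then obtain T0 where T0: "\<And>t. t \<ge> T0 \<Longrightarrow> \<bar>(ln (S (2*t)) - ln (S t)) + \<alpha> * ln 2\<bar> < \<delta>"
    by (auto simp: eventually_at_top_linorder dist_real_def)
  define T where "T = max T0 (max (z+1) 1)"
  have T: "T \<ge> T0" "T > z" "T \<ge> 1" by (auto simp: T_def)
  have step: "\<bar>\<phi> (2*t) - \<phi> t\<bar> \<le> \<delta>" if "t \<ge> T" for t
  proof -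
    have "t > 0" using T that by simp
    hence "\<phi> (2*t) - \<phi> t = (ln (S (2*t)) - ln (S t)) + \<alpha> * ln 2"
      by (simp add: \<phi>_def ln_mult algebra_simps)
    thus ?thesis using T0[of t] T that by simp
  qed
  define B where "B = \<bar>ln (S T)\<bar> + \<bar>ln (S (2*T))\<bar> + \<alpha> * \<bar>ln (2*T)\<bar> + \<alpha> * \<bar>ln T\<bar>"
  have base: "\<bar>\<phi> t\<bar> \<le> B" if "T \<le> t" "t \<le> 2*T" for t
  proof -
    have p: "S T > 0" "S (2*T) > 0" "S t > 0" using pos T that by auto
    have "S t \<le> S T" "S (2*T) \<le> S t" using mono that by auto
    hence "ln (S t) \<le> ln (S T)" "ln (S (2*T)) \<le> ln (S t)" using p by auto
    moreover have "ln t \<le> ln (2*T)" "ln T \<le> ln t" using that T by auto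
    moreover have "\<alpha> * ln t \<le> \<alpha> * ln (2*T)" "\<alpha> * ln T \<le> \<alpha> * ln t"
      using calculation(3,4) \<alpha> by (auto intro: mult_left_mono)
    moreover have "ln T \<ge> 0" using T by simp
    moreover have "\<alpha> * ln T \<ge> 0" using calculation(7) \<alpha> by simp
    moreover have "\<alpha> * ln (2*T) \<le> \<alpha> * \<bar>ln (2*T)\<bar>" "\<alpha> * ln T \<le> \<alpha> * \<bar>ln T\<bar>"
      using \<alpha> by (auto intro: mult_left_mono)
    moreover have "ln (S T) \<le> \<bar>ln (S T)\<bar>" "- ln (S (2*T)) \<le> \<bar>ln (S (2*T))\<bar>"
       "0 \<le> \<bar>ln (S T)\<bar>" "0 \<le> \<bar>ln (S (2*T))\<bar>" "0 \<le> \<alpha> * \<bar>ln (2*T)\<bar>" using \<alpha> by auto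
    ultimately show ?thesis unfolding \<phi>_def B_def by (intro abs_leI) linarith+
  qed
  have ind: "\<forall>t. T \<le> t \<and> t \<le> 2^(k+1)*T \<longrightarrow> \<bar>\<phi> t\<bar> \<le> B + (\<epsilon>/2) * ln (t/T)" for k :: nat
  proof (induction k)
    case 0
    show ?case
    proof (intro allI impI)
      fix t assume "T \<le> t \<and> t \<le> 2^(0+1)*T"
      moreover have "ln (t/T) \<ge> 0" using calculation T by simp
      moreover have "\<bar>\<phi> t\<bar> \<le> B" using base[of t] calculation by simp
      moreover have "0 \<le> (\<epsilon>/2) * ln (t/T)" using calculation e by simp
      ultimately show "\<bar>\<phi> t\<bar> \<le> B + (\<epsilon>/2) * ln (t/T)" by linarith
    qed
  next
    case (Suc k)
    show ?case
    proof (intro allI impI)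
      fix t assume t: "T \<le> t \<and> t \<le> 2^(Suc k+1)*T"
      show "\<bar>\<phi> t\<bar> \<le> B + (\<epsilon>/2) * ln (t/T)"
      proof (cases "t \<le> 2*T")
        case True
        moreover have "ln (t/T) \<ge> 0" using t T by simp
        moreover have "\<bar>\<phi> t\<bar> \<le> B" using base[of t] calculation t by simp
        moreover have "0 \<le> (\<epsilon>/2) * ln (t/T)" using calculation e by simp
        ultimately show ?thesis by linarith
      next
        case False
        have h: "T \<le> t/2 \<and> t/2 \<le> 2^(k+1)*T" using t False by auto
        have "\<bar>\<phi> t - \<phi> (t/2)\<bar> \<le> \<delta>" using step[of "t/2"] h by simp
        moreover have "\<bar>\<phi> (t/2)\<bar> \<le> B + (\<epsilon>/2) * ln ((t/2)/T)" using Suc h by blast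
        moreover have "ln ((t/2)/T) = ln (t/T) - ln 2" using T t by (simp add: ln_div ln_mult)
        hence "(\<epsilon>/2) * ln ((t/2)/T) = (\<epsilon>/2) * ln (t/T) - \<delta>" unfolding \<delta>_def
          by (simp add: algebra_simps) (metis distrib_left)
        ultimately show ?thesis by linarith
      qed
    qed
  qed
  have bnd: "\<bar>\<phi> t\<bar> \<le> B + (\<epsilon>/2) * ln t" if "t \<ge> T" for t
  proof -
    obtain k where k: "t/T < 2^k" using real_arch_pow[of 2 "t/T"] by auto
    have "t < T * 2^k" using k T by (simp add: field_simps)
    moreover have "T * 2^k \<le> T * 2^(k+1)" using T by simp
    ultimately have "t \<le> 2^(k+1)*T" by (simp add: mult.commute)
    hence "\<bar>\<phi> t\<bar> \<le> B + (\<epsilon>/2) * ln (t/T)" using ind[of k] that by blast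
    moreover have "ln (t/T) \<le> ln t" using T that by (simp add: ln_div)
    moreover have "(\<epsilon>/2) * ln (t/T) \<le> (\<epsilon>/2) * ln t" using calculation(2) e
      by (intro mult_left_mono) auto
    ultimately show ?thesis by linarith
  qed
  have "eventually (\<lambda>t. ln t \<ge> 2*B/\<epsilon>) at_top"
    using ln_at_top filterlim_at_top by blast
  moreover have "eventually (\<lambda>t. t \<ge> T) at_top" by (rule eventually_ge_at_top)
  ultimately show ?thesis
  proof eventually_elim
    case (elim t)
    have "B \<le> (\<epsilon>/2) * ln t" using elim(1) e by (simp add: field_simps)
    thus ?case using bnd[OF elim(2)] unfolding \<phi>_def by simp
  qed
qed

lemma fbound:
  fixes S f :: "real \<Rightarrow> real" and \<alpha> z TT :: real
  assumes mono: "\<And>s t. s \<le> t \<Longrightarrow> S t \<le> S s"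
    and pos: "\<And>t. t > z \<Longrightarrow> S t > 0"
    and lim: "((\<lambda>t. ln (S (2*t)) - ln (S t)) \<longlongrightarrow> - \<alpha> * ln 2) at_top"
    and \<alpha>: "\<alpha> > 0" and e: "\<epsilon> > 0"
    and f_lo: "\<And>t. t \<ge> TT \<Longrightarrow> (t/2) * f t \<le> S (t/2) - S t"
    and f_hi: "\<And>t. t \<ge> TT \<Longrightarrow> S t - S (2*t) \<le> t * f t"
  shows "eventually (\<lambda>t. t * f t > 0 \<and> \<bar>ln (t * f t) + \<alpha> * ln t\<bar> \<le> \<epsilon> * ln t) at_top"
proof -
  define c where "c = exp (- \<alpha> * ln 2 / 2)"
  have c: "c < 1" "c > 0" using \<alpha> by (auto simp: c_def)
  have "- \<alpha> * ln 2 < - \<alpha> * ln 2 / 2" using \<alpha> by simp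
  hence ev1: "eventually (\<lambda>t. ln (S (2*t)) - ln (S t) < - \<alpha> * ln 2 / 2) at_top"
    using order_tendstoD(2)[OF lim] by blast
  have e2: "\<epsilon>/2 > 0" using e by simp
  note L = logreg[OF mono pos lim \<alpha> e2]
  then obtain N where N: "\<And>t. t \<ge> N \<Longrightarrow> \<bar>ln (S t) + \<alpha> * ln t\<bar> \<le> (\<epsilon>/2) * ln t"
    by (auto simp: eventually_at_top_linorder)
  define K where "K = \<bar>ln (1-c)\<bar> + ln 2 + \<alpha> * ln 2"
  have evK: "eventually (\<lambda>t. ln t \<ge> 2*K/\<epsilon>) at_top"
    using ln_at_top filterlim_at_top by blast
  have evN: "eventually (\<lambda>t. t \<ge> max (2*N) (max (2*\<bar>z\<bar>+2) (max TT 2))) at_top"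
    by (rule eventually_ge_at_top)
  from ev1 evK evN show ?thesis
  proof eventually_elim
    case (elim t)
    have t: "t \<ge> 2*N" "t \<ge> 2*\<bar>z\<bar>+2" "t \<ge> TT" "t \<ge> 2" using elim(3) by auto
    have zt: "t > z" "t/2 > z" "2*t > z" using t by linarith+
    hence Sp: "S t > 0" "S (t/2) > 0" "S (2*t) > 0" using pos by auto
    have "S (2*t) / S t = exp (ln (S (2*t)) - ln (S t))" using Sp by (simp add: exp_diff)
    also have "\<dots> < c" unfolding c_def using elim(1) by simp
    finally have "S (2*t) < c * S t" using Sp by (simp add: field_simps)
    hence lo: "(1-c) * S t \<le> t * f t" using f_hi[OF t(3)] by (simp add: algebra_simps)
    have pos1: "(1-c) * S t > 0" using c Sp by simp
    hence tf: "t * f t > 0" using lo by linarith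
    have "ln ((1-c) * S t) \<le> ln (t * f t)" using lo pos1 by simp
    hence lo2: "ln (1-c) + ln (S t) \<le> ln (t * f t)" using c Sp by (simp add: ln_mult)
    have "t * f t \<le> 2 * S (t/2)" using f_lo[OF t(3)] Sp by simp
    hence "ln (t * f t) \<le> ln (2 * S (t/2))" using tf by simp
    hence hi2: "ln (t * f t) \<le> ln 2 + ln (S (t/2))" using Sp by (simp add: ln_mult)
    have b1: "\<bar>ln (S t) + \<alpha> * ln t\<bar> \<le> (\<epsilon>/2) * ln t" using N[of t] t by simp
    have b2: "\<bar>ln (S (t/2)) + \<alpha> * ln (t/2)\<bar> \<le> (\<epsilon>/2) * ln (t/2)" using N[of "t/2"] t by simp
    have "ln (t/2) \<le> ln t" using t by simp
    hence "(\<epsilon>/2) * ln (t/2) \<le> (\<epsilon>/2) * ln t" using e by (intro mult_left_mono) auto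
    moreover have "\<alpha> * ln (t/2) = \<alpha> * ln t - \<alpha> * ln 2" using t by (simp add: ln_div algebra_simps)
    moreover have "K \<le> (\<epsilon>/2) * ln t" using elim(2) e by (simp add: field_simps)
    moreover have "ln (1-c) \<ge> - \<bar>ln (1-c)\<bar>" by simp
    moreover have "ln (2::real) \<ge> 0" "\<alpha> * ln 2 \<ge> 0" using \<alpha> by auto
    ultimately have "\<bar>ln (t * f t) + \<alpha> * ln t\<bar> \<le> \<epsilon> * ln t"
      using lo2 hi2 b1[unfolded abs_le_iff] b2[unfolded abs_le_iff] unfolding K_def
      by (intro abs_leI) linarith+
    with tf show ?case by simp
  qed
qed

lemma combine:
  fixes l A y \<Phi> lt lg \<alpha> \<epsilon> e Lm :: real
  assumes l: "l > 0" and \<alpha>: "\<alpha> > 0" and \<epsilon>: "0 < \<epsilon>" "\<epsilon> \<le> \<alpha>/2" "\<epsilon> \<le> 1"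
    and y: "0 \<le> y" "y \<le> Lm" and A: "A \<ge> 0"
    and I1: "\<bar>l - \<alpha>*A\<bar> \<le> \<epsilon>*A + \<alpha>*ln 2"
    and I2: "\<bar>lt + \<alpha>*(A + l/\<alpha>*y)\<bar> \<le> \<epsilon>*(A + l/\<alpha>*y)"
    and \<Phi>: "\<bar>\<Phi>\<bar> \<le> 1"
    and lg: "lg = l + A + ln \<alpha> - ln l + (l/\<alpha> - 1)*y + \<Phi> + (lt - (A + l/\<alpha>*y))"
    and ee: "\<epsilon>*(4+Lm)/\<alpha> \<le> e/2"
    and rest: "(4*ln 2 + \<alpha>*ln 2 + \<bar>ln \<alpha>\<bar> + Lm + 1 + \<bar>ln l\<bar>)/l < e/2"
  shows "\<bar>lg/l - (-y)\<bar> < e"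
proof -
  have ly: "l/\<alpha>*y = l*y/\<alpha>" by simp
  have lg2: "lg + l*y = (l - \<alpha>*A) + ln \<alpha> - ln l - y + \<Phi> + (lt + \<alpha>*(A + l/\<alpha>*y))"
    using \<alpha> unfolding lg by (simp add: field_simps)
  have "\<epsilon>*A \<le> \<alpha>/2 * A" using \<epsilon> A by (intro mult_right_mono) auto
  hence Ab: "A \<le> 2*l/\<alpha> + 2*ln 2" using I1 \<alpha> by (simp add: field_simps abs_le_iff)
  have "l*y \<le> l*Lm" using y l by (intro mult_left_mono) auto
  hence Tb: "A + l/\<alpha>*y \<le> A + l*Lm/\<alpha>" using \<alpha> by (simp add: divide_right_mono)
  have "\<epsilon>*(A + l/\<alpha>*y) \<le> \<epsilon>*(A + l*Lm/\<alpha>)" using Tb \<epsilon> by (intro mult_left_mono) auto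
  have "\<epsilon>*A \<le> \<epsilon>*(2*l/\<alpha> + 2*ln 2)" using Ab \<epsilon> by (intro mult_left_mono) auto
  have "\<bar>lg + l*y\<bar> \<le> \<bar>l - \<alpha>*A\<bar> + \<bar>ln \<alpha>\<bar> + \<bar>ln l\<bar> + y + 1 + \<epsilon>*(A + l/\<alpha>*y)"
    using lg2 I2 \<Phi> y by (simp add: abs_le_iff) linarith
  also have "\<dots> \<le> 2*(\<epsilon>*A) + \<alpha>*ln 2 + \<bar>ln \<alpha>\<bar> + \<bar>ln l\<bar> + Lm + 1 + \<epsilon>*(l*Lm/\<alpha>)"
    using I1 y \<open>\<epsilon>*(A + l/\<alpha>*y) \<le> \<epsilon>*(A + l*Lm/\<alpha>)\<close> by (simp add: algebra_simps)
  also have "\<dots> \<le> 2*(\<epsilon>*(2*l/\<alpha> + 2*ln 2)) + \<alpha>*ln 2 + \<bar>ln \<alpha>\<bar> + \<bar>ln l\<bar> + Lm + 1 + \<epsilon>*(l*Lm/\<alpha>)"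
    using \<open>\<epsilon>*A \<le> \<epsilon>*(2*l/\<alpha> + 2*ln 2)\<close> by simp
  also have "\<dots> = l * (\<epsilon>*(4+Lm)/\<alpha>) + (4*\<epsilon>*ln 2 + \<alpha>*ln 2 + \<bar>ln \<alpha>\<bar> + \<bar>ln l\<bar> + Lm + 1)"
    using \<alpha> by (simp add: field_simps)
  also have "\<dots> \<le> l * (e/2) + (4*ln 2 + \<alpha>*ln 2 + \<bar>ln \<alpha>\<bar> + Lm + 1 + \<bar>ln l\<bar>)"
  proof -
    have "l * (\<epsilon>*(4+Lm)/\<alpha>) \<le> l*(e/2)" using ee l by (intro mult_left_mono) auto
    moreover have "4*\<epsilon>*ln 2 \<le> 4*ln 2" using \<epsilon> by simp
    ultimately show ?thesis by linarith
  qed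
  also have "\<dots> < l * (e/2) + l * (e/2)" using rest l by (simp add: field_simps)
  finally have "\<bar>lg + l*y\<bar> < l * e" by (simp add: mult.commute)
  moreover have "lg/l - (-y) = (lg + l*y)/l" using l by (simp add: field_simps)
  moreover have "\<bar>(lg + l*y)/l\<bar> = \<bar>lg + l*y\<bar>/l" using l by (simp add: abs_divide)
  moreover have "\<bar>lg + l*y\<bar>/l < e" using calculation(1) l by (simp add: pos_divide_less_eq mult.commute)
  ultimately show ?thesis by (metis minus_minus diff_minus_eq_add)
qed

lemma aux_asymp: "((\<lambda>n. (C + \<bar>ln (ln (real n))\<bar>) / ln (real n)) \<longlongrightarrow> 0) sequentially"
proof -
  have "((\<lambda>n. C / ln (real n) + ln (ln (real n)) / ln (real n)) \<longlongrightarrow> 0) sequentially"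
    by real_asymp
  moreover have "eventually (\<lambda>n. C / ln (real n) + ln (ln (real n)) / ln (real n) = (C + \<bar>ln (ln (real n))\<bar>) / ln (real n)) sequentially"
  proof -
    have "eventually (\<lambda>n. ln (ln (real n)) \<ge> 0) sequentially" by real_asymp
    thus ?thesis by eventually_elim (simp add: add_divide_distrib)
  qed
  ultimately show ?thesis by (rule Lim_transform_eventually)
qed

theorem mainTheorem4:
  fixes P :: "'a measure" and X :: "nat \<Rightarrow> 'a \<Rightarrow> real"
    and F f L :: "real \<Rightarrow> real" and \<alpha> x0 x1 M :: real
  assumes "prob_space P"
    and rv: "\<And>n. X n \<in> borel_measurable P"
    and indep: "prob_space.indep_vars P (\<lambda>_. borel) X UNIV"
    and ident: "\<And>n. distr P borel (X n) = distr P borel (X 0)"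
    and F_def: "\<And>x. F x = measure P {\<omega> \<in> space P. X 0 \<omega> \<le> x}"
    and x0: "x0 > 0" and \<alpha>: "\<alpha> > 0" and L: "slowly_varying L"
    and tail: "\<And>x. x > x0 \<Longrightarrow> measure P {\<omega> \<in> space P. X 0 \<omega> > x} = x powr (- \<alpha>) * L x"
    and f_meas: "f \<in> borel_measurable borel"
    and f_nonneg: "\<And>x. f x \<ge> 0"
    and density: "distr P borel (X 0) = density lborel (\<lambda>x. ennreal (f x))"
    and f_mono: "\<And>x y. x1 \<le> x \<Longrightarrow> x \<le> y \<Longrightarrow> f y \<le> f x"
    and M: "M > 1"
  shows "uniform_limit {1..M} (\<lambda>n x. ln (g_seq F f \<alpha> n x) / ln (real n)) (\<lambda>x. - ln x) sequentially"
proof -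
  interpret P: prob_space P by fact
  define D where "D = distr P borel (X 0)"
  have rv0: "X 0 \<in> borel_measurable P" using rv by simp
  interpret D: real_distribution D unfolding D_def using rv0 by (rule P.real_distribution_distr)
  have Fc: "F x = cdf D x" for x
  proof -
    have "cdf D x = measure D {..x}" by (simp add: cdf_def)
    also have "\<dots> = measure P (X 0 -` {..x} \<inter> space P)" unfolding D_def
      by (rule measure_distr) (use rv0 in auto)
    also have "X 0 -` {..x} \<inter> space P = {\<omega>\<in>space P. X 0 \<omega> \<le> x}" by auto
    finally show ?thesis using F_def by simp
  qed
  define S where "S t = 1 - F t" for t
  have S_tail: "S t = measure P {\<omega> \<in> space P. X 0 \<omega> > t}" for t
  proof -
    have "{\<omega> \<in> space P. X 0 \<omega> > t} = space P - {\<omega>\<in>space P. X 0 \<omega> \<le> t}" by auto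
    moreover have "{\<omega>\<in>space P. X 0 \<omega> \<le> t} \<in> P.events" using rv0 by measurable
    ultimately show ?thesis by (simp add: P.prob_compl S_def F_def)
  qed
  have Fmono: "F s \<le> F t" if "s \<le> t" for s t using D.cdf_nondecreasing[OF that] Fc by simp
  have Smono: "S t \<le> S s" if "s \<le> t" for s t using Fmono[OF that] by (simp add: S_def)
  have Lpos: "\<And>x. x > 0 \<Longrightarrow> L x > 0" and Llim: "\<And>t. t > 0 \<Longrightarrow> ((\<lambda>x. L (t * x) / L x) \<longlongrightarrow> 1) at_top"
    using L unfolding slowly_varying_def by auto
  have S_L: "S t = t powr (-\<alpha>) * L t" if "t > x0" for t using tail[OF that] S_tail by simp
  have Spos: "S t > 0" if "t > x0" for t using S_L[OF that] Lpos[of t] that x0 by simp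
  have Slim: "((\<lambda>t. ln (S (2*t)) - ln (S t)) \<longlongrightarrow> - \<alpha> * ln 2) at_top"
  proof -
    have r: "((\<lambda>t. L (2*t) / L t) \<longlongrightarrow> 1) at_top" using Llim[of 2] by simp
    have "((\<lambda>t. ln (L (2*t) / L t)) \<longlongrightarrow> ln 1) at_top" by (rule tendsto_ln[OF r]) simp
    hence "((\<lambda>t. - \<alpha> * ln 2 + ln (L (2*t) / L t)) \<longlongrightarrow> - \<alpha> * ln 2 + ln 1) at_top"
      by (rule tendsto_add[OF tendsto_const])
    hence *: "((\<lambda>t. - \<alpha> * ln 2 + ln (L (2*t) / L t)) \<longlongrightarrow> - \<alpha> * ln 2) at_top" by simp
    have "eventually (\<lambda>t. t > x0) at_top" by (rule eventually_gt_at_top)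
    hence "eventually (\<lambda>t. - \<alpha> * ln 2 + ln (L (2*t) / L t) = ln (S (2*t)) - ln (S t)) at_top"
    proof eventually_elim
      case (elim t)
      have t0: "t > 0" "2*t > x0" using elim x0 by auto
      have L0: "L t > 0" "L (2*t) > 0" using Lpos t0 by auto
      have p0: "t powr (-\<alpha>) > 0" "(2*t) powr (-\<alpha>) > 0" using t0 by auto
      have "ln (S (2*t)) = ln ((2*t) powr (-\<alpha>)) + ln (L (2*t))"
        unfolding S_L[OF t0(2)] by (rule ln_mult_pos[OF p0(2) L0(2)])
      also have "ln ((2*t) powr (-\<alpha>)) = - \<alpha> * (ln 2 + ln t)" unfolding ln_powr using ln_mult_pos[of 2 t] t0 by simp
      finally have 1: "ln (S (2*t)) = - \<alpha> * (ln 2 + ln t) + ln (L (2*t))" .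
      have "ln (S t) = ln (t powr (-\<alpha>)) + ln (L t)"
        unfolding S_L[OF elim] by (rule ln_mult_pos[OF p0(1) L0(1)])
      also have "ln (t powr (-\<alpha>)) = - \<alpha> * ln t" by (rule ln_powr)
      finally have 2: "ln (S t) = - \<alpha> * ln t + ln (L t)" .
      have 3: "ln (L (2*t) / L t) = ln (L (2*t)) - ln (L t)" by (rule ln_divide_pos[OF L0(2) L0(1)])
      show ?case unfolding 1 2 3 by (simp add: algebra_simps)
    qed
    thus ?thesis by (rule Lim_transform_eventually[OF *])
  qed
  have interval: "(b - a) * f b \<le> F b - F a \<and> F b - F a \<le> (b - a) * f a"
    if ab: "x1 \<le> a" "a \<le> b" for a b
  proof (cases "a = b")
    case True thus ?thesis by simp
  next
    case False
    hence ab': "a < b" using ab by simp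
    have eq: "F b - F a = measure D {a<..b}" using D.cdf_diff_eq[OF ab'] Fc by simp
    have em: "emeasure D {a<..b} = (\<integral>\<^sup>+ x. ennreal (f x) * indicator {a<..b} x \<partial>lborel)"
      unfolding D_def density using f_meas by (subst emeasure_density) auto
    have "(\<integral>\<^sup>+ x. ennreal (f b) * indicator {a<..b} x \<partial>lborel) \<le> (\<integral>\<^sup>+ x. ennreal (f x) * indicator {a<..b} x \<partial>lborel)"
      using ab by (intro nn_integral_mono) (auto split: split_indicator intro!: ennreal_leI f_mono)
    moreover have "(\<integral>\<^sup>+ x. ennreal (f x) * indicator {a<..b} x \<partial>lborel) \<le> (\<integral>\<^sup>+ x. ennreal (f a) * indicator {a<..b} x \<partial>lborel)"
      using ab by (intro nn_integral_mono) (auto split: split_indicator intro!: ennreal_leI f_mono)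
    moreover have "(\<integral>\<^sup>+ x. ennreal (f c) * indicator {a<..b} x \<partial>lborel) = ennreal ((b - a) * f c)" for c
      using ab' f_nonneg[of c] by (simp add: nn_integral_cmult_indicator ennreal_mult' mult.commute)
    moreover have "emeasure D {a<..b} = ennreal (measure D {a<..b})" by (rule D.emeasure_eq_measure)
    ultimately have "ennreal ((b - a) * f b) \<le> ennreal (measure D {a<..b})"
       "ennreal (measure D {a<..b}) \<le> ennreal ((b - a) * f a)" using em by auto
    moreover have "0 \<le> (b - a) * f a" using ab' f_nonneg[of a] by simp
    ultimately show ?thesis using eq by (simp add: ennreal_le_iff)
  qed
  define T1 where "T1 = max (2 * \<bar>x1\<bar>) 1"
  have f_lo: "(t/2) * f t \<le> S (t/2) - S t" if "t \<ge> T1" for t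
    using interval[of "t/2" t] that unfolding T1_def S_def by auto
  have f_hi: "S t - S (2*t) \<le> t * f t" if "t \<ge> T1" for t
    using interval[of t "2*t"] that unfolding T1_def S_def by auto
  have Feq: "F = cdf D" by (rule ext) (simp add: Fc)
  have Flim_top: "(F \<longlongrightarrow> 1) at_top" unfolding Feq by (rule D.cdf_lim_at_top_prob)
  have Flim_bot: "(F \<longlongrightarrow> 0) at_bot" unfolding Feq using D.cdf_lim_at_bot by simp
  have Fright: "(F \<longlongrightarrow> F a) (at_right a)" for a
    using D.cdf_is_right_cont[of a] unfolding Feq by (simp add: continuous_within)
  have Aprops: "{x. F x \<ge> u} \<noteq> {} \<and> bdd_below {x. F x \<ge> u}" if u: "0 < u" "u < 1" for u
  proof -
    from order_tendstoD(1)[OF Flim_top u(2)] obtain N where "\<And>x. x \<ge> N \<Longrightarrow> F x > u"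
      by (auto simp: eventually_at_top_linorder)
    hence ne: "N \<in> {x. F x \<ge> u}" by fastforce
    from order_tendstoD(2)[OF Flim_bot u(1)] obtain b where b: "\<And>x. x \<le> b \<Longrightarrow> F x < u"
      by (auto simp: eventually_at_bot_linorder)
    have "bdd_below {x. F x \<ge> u}"
    proof (rule bdd_belowI)
      fix x assume "x \<in> {x. F x \<ge> u}"
      thus "b \<le> x" using b[of x] by force
    qed
    with ne show ?thesis by blast
  qed
  define u where "u n = 1 - 1 / real n" for n :: nat
  have ub: "0 < u n" "u n < 1" if "n \<ge> 2" for n using that by (auto simp: u_def field_simps)
  have a_eq: "a_seq F n = Inf {x. F x \<ge> u n}" for n by (simp add: a_seq_def left_inv_def u_def)
  have below: "F y < u n" if n2: "n \<ge> 2" and "y < a_seq F n" for n y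
  proof (rule ccontr)
    assume "\<not> F y < u n"
    hence "y \<in> {x. F x \<ge> u n}" by simp
    hence "Inf {x. F x \<ge> u n} \<le> y" using Aprops[OF ub[OF n2]] by (intro cInf_lower) auto
    thus False using that(2) a_eq by simp
  qed
  have above: "F y \<ge> u n" if n2: "n \<ge> 2" and "y > a_seq F n" for n y
  proof -
    have "Inf {x. F x \<ge> u n} < y" using that a_eq by simp
    then obtain z where "z \<in> {x. F x \<ge> u n}" "z < y"
      using cInf_less_iff[of "{x. F x \<ge> u n}"] Aprops[OF ub[OF n2]] by blast
    thus ?thesis using Fmono[of z y] by simp
  qed
  have at_a: "F (a_seq F n) \<ge> u n" if "n \<ge> 2" for n
  proof (rule tendsto_lowerbound[OF Fright])
    show "eventually (\<lambda>y. u n \<le> F y) (at_right (a_seq F n))"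
      using eventually_at_right_less by (rule eventually_mono) (use above that in auto)
  qed simp
  have u_lim: "(u \<longlongrightarrow> 1) sequentially" unfolding u_def by real_asymp
  have a_top: "filterlim (\<lambda>n. a_seq F n) at_top sequentially"
    unfolding filterlim_at_top
  proof
    fix Z :: real
    define Y where "Y = max Z (x0 + 1)"
    have "F Y < 1" using Spos[of Y] x0 by (simp add: Y_def S_def)
    hence "eventually (\<lambda>n. u n > F Y) sequentially" using order_tendstoD(1)[OF u_lim] by blast
    moreover have "eventually (\<lambda>n. n \<ge> (2::nat)) sequentially" by (rule eventually_ge_at_top)
    ultimately show "eventually (\<lambda>n. Z \<le> a_seq F n) sequentially"
    proof eventually_elim
      case (elim n)
      have "Y \<le> a_seq F n"
      proof (rule ccontr)
        assume "\<not> Y \<le> a_seq F n"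
        hence "F Y \<ge> u n" using above[OF elim(2)] by simp
        thus False using elim(1) by simp
      qed
      thus ?case by (simp add: Y_def)
    qed
  qed
  show ?thesis
  proof (rule uniform_limitI)
    fix e :: real assume e: "e > 0"
    have lnM: "ln M > 0" using M by simp
    define \<epsilon> where "\<epsilon> = min (\<alpha>/2) (min 1 (e*\<alpha>/(2*(4+ln M))))"
    have "e*\<alpha>/(2*(4+ln M)) > 0" using \<alpha> e lnM by simp
    hence \<epsilon>0: "\<epsilon> > 0" using \<alpha> unfolding \<epsilon>_def by auto
    have \<epsilon>: "\<epsilon> > 0" "\<epsilon> \<le> \<alpha>/2" "\<epsilon> \<le> 1" using \<epsilon>0 unfolding \<epsilon>_def by (simp_all only: min.bounded_iff min_le_iff_disj) auto
    have "\<epsilon> \<le> e*\<alpha>/(2*(4+ln M))" by (simp add: \<epsilon>_def)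
    hence ee: "\<epsilon>*(4+ln M)/\<alpha> \<le> e/2" using \<alpha> lnM by (simp add: field_simps)
    from fbound[where S=S and f=f and z=x0 and TT=T1 and \<alpha>=\<alpha>, OF Smono Spos Slim \<alpha> \<epsilon>(1) f_lo f_hi] obtain TF where TF:
      "\<And>t. t \<ge> TF \<Longrightarrow> t * f t > 0 \<and> \<bar>ln (t * f t) + \<alpha> * ln t\<bar> \<le> \<epsilon> * ln t"
      by (auto simp: eventually_at_top_linorder)
    from logreg[where S=S and z=x0 and \<alpha>=\<alpha>, OF Smono Spos Slim \<alpha> \<epsilon>(1)] obtain TL where TL:
      "\<And>t. t \<ge> TL \<Longrightarrow> \<bar>ln (S t) + \<alpha> * ln t\<bar> \<le> \<epsilon> * ln t"
      by (auto simp: eventually_at_top_linorder)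
    define Tb where "Tb = max TF (max (2*TL) (2*x0 + 2))"
    define C where "C = 4*ln 2 + \<alpha>*ln 2 + \<bar>ln \<alpha>\<bar> + ln M + 1"
    have ev1: "eventually (\<lambda>n. Tb \<le> a_seq F n) sequentially"
      using a_top unfolding filterlim_at_top by blast
    have ev2: "eventually (\<lambda>n. n \<ge> (2::nat)) sequentially" by (rule eventually_ge_at_top)
    have ev3: "eventually (\<lambda>n. (C + \<bar>ln (ln (real n))\<bar>) / ln (real n) < e/2) sequentially"
      using order_tendstoD(2)[OF aux_asymp[of C], of "e/2"] e by (simp only: half_gt_zero_iff)
    from ev1 ev2 ev3 show "eventually (\<lambda>n. \<forall>x\<in>{1..M}. dist (ln (g_seq F f \<alpha> n x) / ln (real n)) (- ln x) < e) sequentially"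
    proof eventually_elim
      case (elim n)
      define l where "l = ln (real n)"
      define a where "a = a_seq F n"
      define A where "A = ln a"
      have n2: "n \<ge> 2" by fact
      have l: "l > 0" using n2 by (simp add: l_def)
      have aT: "a \<ge> Tb" using elim(1) by (simp add: a_def)
      have a: "a \<ge> TF" "a/2 \<ge> TL" "a \<ge> TL" "a > x0" "a/2 > x0" "a \<ge> 2"
        using aT x0 by (auto simp: Tb_def)
      have A0: "A \<ge> 0" using a by (simp add: A_def)
      have Sa: "S a \<le> 1/real n" using at_a[OF n2] by (simp add: S_def u_def a_def)
      have Sa2: "S (a/2) \<ge> 1/real n" using below[OF n2, of "a/2"] a
        by (simp add: S_def u_def a_def)
      have "ln (S a) \<le> ln (1/real n)" using Sa Spos[OF a(4)] n2 by (subst ln_le_cancel_iff) auto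
      also have "ln (1/real n) = - l" using n2 by (simp add: l_def ln_divide_pos)
      finally have lnSa: "ln (S a) \<le> - l" .
      have "ln (1/real n) \<le> ln (S (a/2))" using Sa2 Spos[OF a(5)] n2 by (subst ln_le_cancel_iff) auto
      hence lnSa2: "- l \<le> ln (S (a/2))" using n2 by (simp add: l_def ln_divide_pos)
      have ba: "\<bar>ln (S a) + \<alpha> * A\<bar> \<le> \<epsilon> * A" using TL[OF a(3)] by (simp add: A_def)
      have ba2: "\<bar>ln (S (a/2)) + \<alpha> * ln (a/2)\<bar> \<le> \<epsilon> * ln (a/2)" using TL[OF a(2)] by simp
      have la2: "ln (a/2) = A - ln 2" using a by (simp add: A_def ln_divide_pos)
      have "\<epsilon> * ln (a/2) \<le> \<epsilon> * A" using la2 \<epsilon> by (intro mult_left_mono) auto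
      moreover have "\<alpha> * ln (a/2) = \<alpha> * A - \<alpha> * ln 2" unfolding la2 by (rule right_diff_distrib)
      moreover have "\<alpha> * ln 2 \<ge> 0" using \<alpha> by simp
      ultimately have I1: "\<bar>l - \<alpha>*A\<bar> \<le> \<epsilon>*A + \<alpha>*ln 2"
        using lnSa lnSa2 ba[unfolded abs_le_iff] ba2[unfolded abs_le_iff] \<alpha> \<epsilon>
          \<open>\<alpha> * ln 2 \<ge> 0\<close> by (intro abs_leI) linarith+
      have rest: "(4*ln 2 + \<alpha>*ln 2 + \<bar>ln \<alpha>\<bar> + ln M + 1 + \<bar>ln l\<bar>)/l < e/2"
        using elim(3) by (simp add: C_def l_def)
      show "\<forall>x\<in>{1..M}. dist (ln (g_seq F f \<alpha> n x) / ln (real n)) (- ln x) < e"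
      proof
        fix x assume x: "x \<in> {1..M}"
        define y where "y = ln x"
        define t where "t = t_seq F \<alpha> n x"
        have x1': "1 \<le> x" "x \<le> M" using x by auto
        have y: "0 \<le> y" "y \<le> ln M" using x1' by (auto simp: y_def)
        have xp: "x powr (l/\<alpha>) \<ge> 1" using x1' l \<alpha> by (intro ge_one_powr_ge_zero) auto
        have t_eq: "t = a * x powr (l/\<alpha>)" by (simp add: t_def t_seq_def a_def l_def)
        have "a * 1 \<le> a * x powr (l/\<alpha>)" using xp a by (intro mult_left_mono) auto
        hence ta: "a \<le> t" using t_eq by simp
        have tpos: "t > 0" using ta a by simp
        have lnt: "ln t = A + l/\<alpha>*y"
          unfolding t_eq A_def y_def using a x1' by (subst ln_mult_pos) auto
        have tf: "t * f t > 0" and I2': "\<bar>ln (t * f t) + \<alpha> * ln t\<bar> \<le> \<epsilon> * ln t"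
          using TF[of t] ta a by auto
        have I2: "\<bar>ln (t * f t) + \<alpha>*(A + l/\<alpha>*y)\<bar> \<le> \<epsilon>*(A + l/\<alpha>*y)" using I2' lnt by simp
        have ft: "f t > 0" using tf tpos by (simp add: zero_less_mult_iff)
        have Ftu: "F t \<ge> u n" using Fmono[OF ta] at_a[OF n2] by (simp add: a_def)
        have Ft1: "F t \<le> 1" using D.cdf_bounded_prob Fc by simp
        have un: "u n > 0" using ub[OF n2] by simp
        have Ftp: "F t > 0" using Ftu un by linarith
        define m where "m = real n - 1"
        have m: "m \<ge> 1" using n2 by (simp add: m_def)
        have mn: "real (n - 1) = m" using n2 by (simp add: m_def of_nat_diff)
        have "(1 + 1/m) * u n = 1" using m n2 by (simp add: u_def m_def field_simps)
        moreover have "0 < 1 + 1/m" using m by (simp add: add_pos_pos)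
        ultimately have "ln (1 + 1/m) + ln (u n) = 0" using un by (subst ln_mult_pos[symmetric]) auto
        moreover have "ln (1 + 1/m) \<le> 1/m" using m by (intro ln_add_one_self_le_self) auto
        ultimately have "ln (u n) \<ge> - (1/m)" by linarith
        moreover have "ln (u n) \<le> ln (F t)" using Ftu un by (subst ln_le_cancel_iff) auto
        ultimately have "m * ln (F t) \<ge> m * (- (1/m))" using m by (intro mult_left_mono) auto
        hence \<Phi>lo: "m * ln (F t) \<ge> -1" using m by simp
        have "ln (F t) \<le> 0" using Ft1 Ftp by simp
        hence "m * ln (F t) \<le> 0" using m by (simp add: mult_nonneg_nonpos)
        hence \<Phi>: "\<bar>real (n - 1) * ln (F t)\<bar> \<le> 1" using \<Phi>lo mn by simp
        have g_eq: "g_seq F f \<alpha> n x = real n * a * (\<alpha> / l) * x powr (l/\<alpha> - 1) * F t ^ (n-1) * f t"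
          by (simp add: g_seq_def t_def a_def l_def)
        have p: "real n > 0" "a > 0" "\<alpha> / l > 0" "x powr (l/\<alpha> - 1) > 0" "F t ^ (n-1) > 0"
          using n2 a \<alpha> l x1' Ftp by auto
        have "ln (g_seq F f \<alpha> n x) = ln (real n) + ln a + ln (\<alpha> / l) + ln (x powr (l/\<alpha> - 1))
              + ln (F t ^ (n-1)) + ln (f t)"
        proof -
          have q1: "real n * a > 0" using p by (intro mult_pos_pos)
          have q2: "real n * a * (\<alpha> / l) > 0" using q1 p by (intro mult_pos_pos)
          have q3: "real n * a * (\<alpha> / l) * x powr (l/\<alpha> - 1) > 0" using q2 p by (intro mult_pos_pos)
          have q4: "real n * a * (\<alpha> / l) * x powr (l/\<alpha> - 1) * F t ^ (n-1) > 0" using q3 p by (intro mult_pos_pos)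
          show ?thesis unfolding g_eq
            ln_mult_pos[OF q4 ft] ln_mult_pos[OF q3 p(5)] ln_mult_pos[OF q2 p(4)]
            ln_mult_pos[OF q1 p(3)] ln_mult_pos[OF p(1) p(2)] ..
        qed
        also have "ln (\<alpha> / l) = ln \<alpha> - ln l" using \<alpha> l by (rule ln_divide_pos)
        also have "ln (x powr (l/\<alpha> - 1)) = (l/\<alpha> - 1) * y" by (simp add: y_def)
        also have "ln (F t ^ (n-1)) = real (n - 1) * ln (F t)" by (rule ln_realpow)
        also have "ln (f t) = ln (t * f t) - ln t"
        proof -
          have "f t = (t * f t) / t" using tpos by simp
          hence "ln (f t) = ln ((t * f t) / t)" by simp
          also have "\<dots> = ln (t * f t) - ln t" using tf tpos by (rule ln_divide_pos)
          finally show ?thesis .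
        qed
        finally have lg: "ln (g_seq F f \<alpha> n x) = l + A + ln \<alpha> - ln l + (l/\<alpha> - 1)*y
              + real (n - 1) * ln (F t) + (ln (t * f t) - (A + l/\<alpha>*y))"
          unfolding lnt by (simp add: l_def A_def)
        have "\<bar>ln (g_seq F f \<alpha> n x)/l - (-y)\<bar> < e"
          by (rule combine[OF l \<alpha> \<epsilon> y A0 I1 I2 \<Phi> lg ee rest])
        thus "dist (ln (g_seq F f \<alpha> n x) / ln (real n)) (- ln x) < e"
          by (simp add: dist_real_def l_def y_def)
      qed
    qed
  qed
qed
end
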